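(* For every strategy profile $s$ with $S_0(s)\vee S_1(s)$: if $\mathsf{SBcAes}(s)$ then $\mathsf{SPE}(s)$.
   Context: Let $P=\{A,B\}$ and $\mathrm{Choice}=\{d,r\}$; a payoff function is $f:P\to\mathbb{R}$. Strategy profiles are elements of the final coalgebra of $X\mapsto\mathbb{R}^P+P\times\mathrm{Choice}\times X\times X$ (finite or infinite trees $\langle f\rangle$ or $\langle p,c,s_d,s_r\rangle$, equality being bisimilarity). The payoff $\widehat{s}$ is the partial function given by $\widehat{\langle f\rangle}=f$, $\widehat{\langle p,d,s_d,s_r\rangle}=\widehat{s_d}$, $\widehat{\langle p,r,s_d,s_r\rangle}=\widehat{s_r}$. Convergence $\downarrow$: least predicate with $\downarrow(s)$ iff $s=\langle f\rangle$, or $s=\langle p,d,s_d,s_r\rangle\wedge\downarrow(s_d)$, or $s=\langle p,r,s_d,s_r\rangle\wedge\downarrow(s_r)$. Strong convergence $\Downarrow$: greatest predicate with $\Downarrow(s)$ iff $s=\langle f\rangle$, or $s=\langle p,c,s_d,s_r\rangle$ with $\downarrow(s),\Downarrow(s_d),\Downarrow(s_r)$. For a predicate $\Phi$, $\Box\Phi$ is the greatest predicate such that $\Box\Phi(s)$ iff $\Phi(s)$ and, whenever $s=\langle p,c,s_d,s_r\rangle$, $\Box\Phi(s_d)$ and $\Box\Phi(s_r)$. $\mathsf{PE}(s)$ holds iff $\Downarrow(s)$ and (if $s=\langle p,d,s_d,s_r\rangle$ then $\widehat{s_d}(p)\ge\widehat{s_r}(p)$) and (if $s=\langle p,r,s_d,s_r\rangle$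 then $\widehat{s_r}(p)\ge\widehat{s_d}(p)$); $\mathsf{SPE}=\Box\,\mathsf{PE}$. Let $f_{0,1}=(A\mapsto0,B\mapsto1)$, $f_{1,0}=(A\mapsto1,B\mapsto0)$. $S_0,S_1$ are the greatest predicates with $S_0(s)$ iff $s=\langle A,c,\langle f_{0,1}\rangle,s'\rangle$ with $S_1(s')$, and $S_1(s)$ iff $s=\langle B,c,\langle f_{1,0}\rangle,s'\rangle$ with $S_0(s')$. $\mathsf{BcAes}$ ("B continues and A eventually stops") is the least predicate such that $\mathsf{BcAes}(s)$ holds iff: whenever $s=\langle p,c,\langle f\rangle,s'\rangle$, then ($p=B$, $f=f_{1,0}$, $c=r$, $\mathsf{BcAes}(s')$) or ($p=A$, $f=f_{0,1}$, and ($c=d$ or $\mathsf{BcAes}(s')$)). $\mathsf{SBcAes}=\Box\,\mathsf{BcAes}$. *)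

theory Defs
  imports Complex_Main
begin

datatype agent = A | B
datatype choice = d | r

type_synonym payoff_fun = "agent \<Rightarrow> real"

codatatype strat = Leaf payoff_fun | Node agent choice strat strat

inductive conv :: "strat \<Rightarrow> bool" where
  "(s = Leaf f) \<Longrightarrow> conv s"
| "s = Node p d sd sr \<Longrightarrow> conv sd \<Longrightarrow> conv s"
| "s = Node p r sd sr \<Longrightarrow> conv sr \<Longrightarrow> conv s"

partial_function (option) payoff :: "strat \<Rightarrow> payoff_fun option" where
  "payoff s = (case s of Leaf f \<Rightarrow> Some f
      | Node p c sd sr \<Rightarrow> (if c = d then payoff sd else payoff sr))"

coinductive sconv :: "strat \<Rightarrow> bool" where
  "(s = Leaf f) \<Longrightarrow> sconv s"
| "s = Node p c sd sr \<Longrightarrow> conv s \<Longrightarrow> sconv sd \<Longrightarrow> sconv sr \<Longrightarrow> sconv s"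

coinductive Always :: "(strat \<Rightarrow> bool) \<Rightarrow> strat \<Rightarrow> bool" for \<Phi> where
  "\<Phi> s \<Longrightarrow> (\<forall>p c sd sr. s = Node p c sd sr \<longrightarrow> Always \<Phi> sd \<and> Always \<Phi> sr)
     \<Longrightarrow> Always \<Phi> s"

definition PE :: "strat \<Rightarrow> bool" where
  "PE s \<longleftrightarrow> sconv s
     \<and> (\<forall>p sd sr. s = Node p d sd sr \<longrightarrow> the (payoff sd) p \<ge> the (payoff sr) p)
     \<and> (\<forall>p sd sr. s = Node p r sd sr \<longrightarrow> the (payoff sr) p \<ge> the (payoff sd) p)"

definition SPE :: "strat \<Rightarrow> bool" where
  "SPE = Always PE"

definition f01 :: payoff_fun where
  "f01 = (\<lambda>x. if x = A then 0 else 1)"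

definition f10 :: payoff_fun where
  "f10 = (\<lambda>x. if x = A then 1 else 0)"

coinductive S0 :: "strat \<Rightarrow> bool" and S1 :: "strat \<Rightarrow> bool" where
  "s = Node A c (Leaf f01) s' \<Longrightarrow> S1 s' \<Longrightarrow> S0 s"
| "s = Node B c (Leaf f10) s' \<Longrightarrow> S0 s' \<Longrightarrow> S1 s"

text \<open>"B continues and A eventually stops" (least predicate).\<close>
inductive BcAes :: "strat \<Rightarrow> bool" where
  "(\<forall>p c f s'. s = Node p c (Leaf f) s' \<longrightarrow>
      ((p = B \<and> f = f10 \<and> c = r \<and> BcAes s')
       \<or> (p = A \<and> f = f01 \<and> (c = d \<or> BcAes s')))) \<Longrightarrow> BcAes s"

definition SBcAes :: "strat \<Rightarrow> bool" where
  "SBcAes = Always BcAes"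

end

theory Submission
  imports Defs
begin

lemma payoff_eq: "payoff s = (case s of Leaf f \<Rightarrow> Some f
      | Node p c sd sr \<Rightarrow> (if c = d then payoff sd else payoff sr))"
  by (rule payoff.simps)

lemma L: "BcAes s \<Longrightarrow> (S0 s \<or> S1 s) \<Longrightarrow> conv s \<and> payoff s = Some f01"
proof (induction rule: BcAes.induct)
  case (1 s)
  from 1(2) obtain p c f s' where s: "s = Node p c (Leaf f) s'"
    and pc: "(p=A \<and> f = f01 \<and> S1 s') \<or> (p = B \<and> f = f10 \<and> S0 s')"
    by (auto elim: S0.cases S1.cases)
  from 1(1) s have H: "(p = B \<and> f = f10 \<and> c = r \<and> BcAes s' \<and> ((S0 s' \<or> S1 s') \<longrightarrow> conv s' \<and> payoff s' = Some f01))
       \<or> (p = A \<and> f = f01 \<and> (c = d \<or> (BcAes s' \<and> ((S0 s' \<or> S1 s') \<longrightarrow> conv s' \<and> payoff s' = Some f01))))"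
    by blast
  show ?case
  proof (cases "c = d")
    case True
    with H have "f = f01" by auto
    with True s show ?thesis by (auto intro: conv.intros simp: payoff_eq)
  next
    case False
    then have cr: "c = r" by (cases c) auto
    with H pc have "conv s' \<and> payoff s' = Some f01" by auto
    with cr s show ?thesis by (auto intro: conv.intros simp: payoff_eq)
  qed
qed

lemma Always_sub: "Always P (Node p c sd sr) \<Longrightarrow> Always P sd \<and> Always P sr"
  by (erule Always.cases) auto

lemma Always_self: "Always P s \<Longrightarrow> P s"
  by (erule Always.cases) auto

definition Q :: "strat \<Rightarrow> bool" where
  "Q s \<longleftrightarrow> (\<exists>f. s = Leaf f) \<or> ((S0 s \<or> S1 s) \<and> SBcAes s)"

lemma Q_node:
  assumes "Q s" "s = Node p c sd sr"
  shows "Q sd \<and> Q sr \<and> PE s"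
proof -
  from assms have S: "S0 s \<or> S1 s" and SB: "SBcAes s" by (auto simp: Q_def)
  from S assms(2) have sd: "(p = A \<and> sd = Leaf f01 \<and> S1 sr) \<or> (p = B \<and> sd = Leaf f10 \<and> S0 sr)"
    by (auto elim: S0.cases S1.cases)
  from SB assms(2) have SBr: "SBcAes sr" and SBd: "SBcAes sd" using Always_sub unfolding SBcAes_def by blast+
  have Br: "BcAes sr" using SBr Always_self unfolding SBcAes_def by blast
  have Bs: "BcAes s" using SB Always_self unfolding SBcAes_def by blast
  have Lr: "conv sr \<and> payoff sr = Some f01" using L[OF Br] sd by auto
  have Ls: "conv s \<and> payoff s = Some f01" using L[OF Bs S] .
  have Qd: "Q sd" using sd by (auto simp: Q_def)
  have Qr: "Q sr" using sd SBr by (auto simp: Q_def)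
  have sconvQ: "Q x \<Longrightarrow> sconv x" for x
  proof (coinduction arbitrary: x rule: sconv.coinduct)
    case (sconv x)
    show ?case
    proof (cases x)
      case (Leaf f) then show ?thesis by auto
    next
      case (Node p' c' sd' sr')
      from sconv Node have "S0 x \<or> S1 x" "SBcAes x" by (auto simp: Q_def)
      with Node have "S0 x \<or> S1 x" "BcAes x" using Always_self unfolding SBcAes_def by blast+
      then have "conv x" using L by blast
      moreover have "Q sd'" "Q sr'"
      proof -
        from \<open>S0 x \<or> S1 x\<close> Node have a: "(sd' = Leaf f01 \<and> S1 sr') \<or> (sd' = Leaf f10 \<and> S0 sr')"
          by (auto elim: S0.cases S1.cases)
        from \<open>SBcAes x\<close> Node have "SBcAes sr'" using Always_sub unfolding SBcAes_def by blast
        with a show "Q sd'" "Q sr'" by (auto simp: Q_def)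
      qed
      ultimately show ?thesis using Node by auto
    qed
  qed
  have Bc: "c = r" if "p = B"
  proof -
    from Bs have "\<forall>p' c' f s'. s = Node p' c' (Leaf f) s' \<longrightarrow>
      ((p' = B \<and> f = f10 \<and> c' = r \<and> BcAes s')
       \<or> (p' = A \<and> f = f01 \<and> (c' = d \<or> BcAes s')))" by (cases rule: BcAes.cases) auto
    with sd that assms(2) show ?thesis by auto
  qed
  have "PE s"
    unfolding PE_def
  proof (intro conjI allI impI)
    show "sconv s" using sconvQ assms(1) .
  next
    fix p' sd' sr' assume h: "s = Node p' d sd' sr'"
    with assms(2) have "p' = p" "c = d" "sd' = sd" "sr' = sr" by auto
    with Bc sd Lr show "the (payoff sr') p' \<le> the (payoff sd') p'"
      by (auto simp: payoff_eq f01_def f10_def)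
  next
    fix p' sd' sr' assume h: "s = Node p' r sd' sr'"
    with assms(2) have "p' = p" "c = r" "sd' = sd" "sr' = sr" by auto
    with sd Lr show "the (payoff sd') p' \<le> the (payoff sr') p'"
      by (auto simp: payoff_eq f01_def f10_def)
  qed
  with Qd Qr show ?thesis by auto
qed

lemma Q_PE: "Q s \<Longrightarrow> PE s"
proof (cases s)
  case (Leaf f)
  then show ?thesis
    by (auto simp: PE_def intro: sconv.intros)
next
  case (Node p c sd sr)
  assume "Q s" then show ?thesis using Q_node Node by blast
qed

theorem mainTheorem10:
  fixes s :: strat
  assumes "S0 s \<or> S1 s"
    and "SBcAes s"
  shows "SPE s"
proof -
  have "Q s" using assms by (auto simp: Q_def)
  then show ?thesis
    unfolding SPE_def
  proof (coinduction arbitrary: s rule: Always.coinduct)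
    case (Always s)
    then show ?case using Q_PE Q_node by blast
  qed
qed

end
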